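(* Let $C_n(a,b)$ be a connected $2$-regular circulant digraph (so $\gcd(n,a,b)=1$) and let $l\ge1$. Then the number of primitive periodic orbits of length $l$ is $$|\mathcal{P}_l(C_n(a,b))|=\frac{n}{l}\sum_{\omega=\lceil la/n\rceil}^{\lfloor lb/n\rfloor}\ \sum_{m\mid\omega}\mu(m)\binom{l/m}{k_\omega/m},$$ where $k_\omega=(\omega n-la)/(b-a)$, $\mu$ is the Möbius function, and $\binom{x}{y}$ is interpreted as $0$ unless both $x$ and $y$ are nonnegative integers.
   Context: Let $n\ge 2$ and $0<a<b<n$ be integers. The directed circulant graph $C_n(a,b)$ has vertex set $\mathbb{Z}_n$ and directed bonds $(v,v+a)$ and $(v,v+b)$ for each $v\in\mathbb{Z}_n$ (addition mod $n$); the bond $(v,v+s)$ has step size $s\in\{a,b\}$. It is (strongly) connected iff $\gcd(n,a,b)=1$. A path of length $l$ is a sequence of bonds $(e_1,\dots,e_l)$ where the terminus of $e_j$ is the origin of $e_{j+1}$. A circuit is a path whose last terminus equals its first origin. A periodic orbit is an equivalence class of circuits under cyclic rotation $\sigma(e_1,\dots,e_l)=(e_2,\dots,e_l,e_1)$. For a circuit $c$, $c^r$ denotes the concatenation of $r$ copies of $c$. A periodic orbit $p$ is primitive if there is no circuit $c_0$ and integer $r>1$ with $p=[c_0^r]$. $\mathcal{P}_l(C_n(a,b))$ denotes the set of primitive periodic orbits of length $l$. *)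

theory Defs
  imports Complex_Main "HOL-Computational_Algebra.Squarefree" "HOL-Computational_Algebra.Primes"
begin

text \<open>Directed circulant graph C_n(a,b): vertices 0..n-1 (representing Z_n),
  a bond is a pair (v, s) with origin v and step size s in {a,b};
  its terminus is (v + s) mod n.\<close>

definition bonds :: "nat \<Rightarrow> nat \<Rightarrow> nat \<Rightarrow> (nat \<times> nat) set" where
  "bonds n a b = {(v, s). v < n \<and> (s = a \<or> s = b)}"

definition origin :: "nat \<times> nat \<Rightarrow> nat" where
  "origin e = fst e"

definition terminus :: "nat \<Rightarrow> nat \<times> nat \<Rightarrow> nat" where
  "terminus n e = (fst e + snd e) mod n"

definition is_path :: "nat \<Rightarrow> nat \<Rightarrow> nat \<Rightarrow> (nat \<times> nat) list \<Rightarrow> bool" where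
  "is_path n a b p \<longleftrightarrow> p \<noteq> [] \<and> set p \<subseteq> bonds n a b \<and>
     (\<forall>j. Suc j < length p \<longrightarrow> terminus n (p ! j) = origin (p ! Suc j))"

definition is_circuit :: "nat \<Rightarrow> nat \<Rightarrow> nat \<Rightarrow> (nat \<times> nat) list \<Rightarrow> bool" where
  "is_circuit n a b c \<longleftrightarrow> is_path n a b c \<and> terminus n (last c) = origin (hd c)"

definition orbit :: "(nat \<times> nat) list \<Rightarrow> (nat \<times> nat) list set" where
  "orbit c = {rotate k c | k. True}"

definition periodic_orbits :: "nat \<Rightarrow> nat \<Rightarrow> nat \<Rightarrow> (nat \<times> nat) list set set" where
  "periodic_orbits n a b = {orbit c | c. is_circuit n a b c}"

definition primitive_orbit :: "nat \<Rightarrow> nat \<Rightarrow> nat \<Rightarrow> (nat \<times> nat) list set \<Rightarrow> bool" where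
  "primitive_orbit n a b p \<longleftrightarrow>
     \<not> (\<exists>c0 r. is_circuit n a b c0 \<and> r > 1 \<and> p = orbit (concat (replicate r c0)))"

definition prim_orbits :: "nat \<Rightarrow> nat \<Rightarrow> nat \<Rightarrow> nat \<Rightarrow> (nat \<times> nat) list set set" where
  "prim_orbits n a b l = {p. \<exists>c. is_circuit n a b c \<and> length c = l \<and> p = orbit c
                              \<and> primitive_orbit n a b p}"

definition moebius :: "nat \<Rightarrow> int" where
  "moebius m = (if m = 0 \<or> \<not> squarefree m then 0 else (-1) ^ card (prime_factors m))"

definition binom_q :: "rat \<Rightarrow> rat \<Rightarrow> rat" where
  "binom_q x y = (if x \<in> \<nat> \<and> y \<in> \<nat>
                   then of_nat (nat \<lfloor>x\<rfloor> choose nat \<lfloor>y\<rfloor>) else 0)"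

end

theory Submission
  imports Defs
begin


lemma moebius_1: "moebius 1 = 1"
  by (simp add: moebius_def)

lemma moebius_mult_prime:
  fixes p e :: nat
  assumes "prime p" "\<not> p dvd e" "e > 0"
  shows "moebius (p*e) = - moebius e"
proof -
  have cop: "coprime p e" using assms by (simp add: prime_imp_coprime)
  have sq: "squarefree (p*e) \<longleftrightarrow> squarefree e"
    using squarefree_mono[of e "p*e"] squarefree_mult_coprime[OF cop] squarefree_prime[OF assms(1)]
    by auto
  have pf: "prime_factors (p*e) = insert p (prime_factors e)"
    using prime_factors_product[of p e] assms prime_prime_factors[OF assms(1)] by auto
  have nin: "p \<notin> prime_factors e" using assms(2) by auto
  show ?thesis using assms sq pf nin by (simp add: moebius_def)
qed

lemma moebius_mult_prime_dvd:
  fixes p e :: nat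
  assumes "prime p" "p dvd e"
  shows "moebius (p*e) = 0"
proof -
  have "p^2 dvd p*e" using assms by (auto simp: power2_eq_square)
  hence "\<not> squarefree (p*e)" using not_squarefreeI[of p "p*e"] assms(1) not_prime_unit[of p] by blast
  thus ?thesis by (simp add: moebius_def)
qed

lemma moebius_sum:
  fixes N :: nat
  assumes "N > 0"
  shows "(\<Sum>m\<in>{m. m>0 \<and> m dvd N}. moebius m) = (if N = 1 then 1 else 0)"
proof (cases "N = 1")
  case True
  hence "{m. m>0 \<and> m dvd N} = {1}" by auto
  thus ?thesis using True by (simp add: moebius_def)
next
  case False
  then obtain p where p: "prime p" "p dvd N" using assms prime_factor_nat[of N] by auto
  define A where "A = {m. m>0 \<and> m dvd N}"
  define A1 where "A1 = {m\<in>A. \<not> p dvd m}"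
  define A2 where "A2 = {m\<in>A. p dvd m}"
  define E where "E = {e. e>0 \<and> e dvd N div p}"
  have finA: "finite A" unfolding A_def using assms
    by (metis (no_types, lifting) finite_divisors_nat mem_Collect_eq rev_finite_subset subsetI)
  have Np: "N div p > 0" using p assms
    by (simp add: div_greater_zero_iff dvd_imp_le prime_gt_0_nat)
  have finE: "finite E" unfolding E_def
    by (rule finite_subset[of _ "{..N div p}"]) (use Np in \<open>auto dest: dvd_imp_le\<close>)
  have key: "\<And>e. e dvd N div p \<longleftrightarrow> p*e dvd N"
    using p dvd_div_iff_mult[of p N] by (auto simp: mult.commute)
  have AU: "A = A1 \<union> A2" "A1 \<inter> A2 = {}" unfolding A1_def A2_def by auto
  have "sum moebius A = sum moebius A1 + sum moebius A2"
    using AU finA by (simp add: sum.union_disjoint)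
  moreover have A2im: "A2 = (\<lambda>e. p*e) ` E"
  proof
    show "A2 \<subseteq> (\<lambda>e. p*e) ` E"
    proof
      fix m assume "m \<in> A2"
      then obtain e where e: "m = p*e" "m>0" "m dvd N" unfolding A2_def A_def by auto
      have "e dvd N div p" using e key by simp
      thus "m \<in> (\<lambda>e. p*e) ` E" using e unfolding E_def by auto
    qed
  next
    show "(\<lambda>e. p*e) ` E \<subseteq> A2"
      unfolding E_def A2_def A_def using p
      by (auto simp: prime_gt_0_nat key)
  qed
  have inj: "inj_on (\<lambda>e. p*e) E" using p by (auto simp: inj_on_def prime_gt_0_nat)
  have "sum moebius A2 = (\<Sum>e\<in>E. moebius (p*e))"
    using A2im inj by (simp add: sum.reindex)
  also have "\<dots> = (\<Sum>e\<in>E. if p dvd e then 0 else - moebius e)"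
    by (rule sum.cong) (auto simp: E_def moebius_mult_prime moebius_mult_prime_dvd p)
  also have "\<dots> = (\<Sum>e\<in>{e\<in>E. \<not> p dvd e}. - moebius e)"
    using finE by (simp add: sum.If_cases) (auto intro!: sum.cong)
  also have "{e\<in>E. \<not> p dvd e} = A1"
  proof
    show "{e\<in>E. \<not> p dvd e} \<subseteq> A1"
      unfolding E_def A1_def A_def using p
      by (auto simp: key dest: dvd_mult_right)
    show "A1 \<subseteq> {e\<in>E. \<not> p dvd e}"
    proof
      fix m assume m: "m \<in> A1"
      hence "coprime p m" using p by (auto simp: A1_def prime_imp_coprime)
      hence "p*m dvd N" using m p by (auto simp: A1_def A_def coprime_commute divides_mult)
      hence "m dvd N div p" using key by simp
      thus "m \<in> {e\<in>E. \<not> p dvd e}" using m by (auto simp: E_def A1_def A_def)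
    qed
  qed
  ultimately show ?thesis using False by (simp add: A_def sum_negf)
qed



lemma rot_mult: assumes "rotate p xs = xs" shows "rotate (k*p) xs = xs"
proof (induction k)
  case (Suc k)
  have "rotate (Suc k * p) xs = rotate p (rotate (k*p) xs)" by (simp add: rotate_rotate add.commute)
  thus ?case using Suc assms by simp
qed simp

definition rper :: "'a list \<Rightarrow> nat" where
  "rper xs = (LEAST j. 0 < j \<and> rotate j xs = xs)"

lemma rper_props:
  assumes "xs \<noteq> []"
  shows "0 < rper xs" "rotate (rper xs) xs = xs" "rper xs dvd length xs"
    "\<And>j. rotate j xs = xs \<longleftrightarrow> rper xs dvd j"
proof -
  have ex: "0 < length xs \<and> rotate (length xs) xs = xs" using assms by simp
  have P: "0 < rper xs \<and> rotate (rper xs) xs = xs"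
    unfolding rper_def by (rule LeastI[of _ "length xs"]) (rule ex)
  thus "0 < rper xs" "rotate (rper xs) xs = xs" by auto
  have iff: "rotate j xs = xs \<longleftrightarrow> rper xs dvd j" for j
  proof
    assume r: "rotate j xs = xs"
    let ?d = "rper xs"
    have "rotate j xs = rotate (j mod ?d) (rotate (j div ?d * ?d) xs)"
      by (simp add: rotate_rotate)
    also have "\<dots> = rotate (j mod ?d) xs" using rot_mult[of ?d xs "j div ?d"] P by simp
    finally have r2: "rotate (j mod ?d) xs = xs" using r by simp
    show "?d dvd j"
    proof (rule ccontr)
      assume "\<not> ?d dvd j"
      hence "0 < j mod ?d" by (simp add: mod_greater_zero_iff_not_dvd)
      moreover have "j mod ?d < ?d" using P by simp
      ultimately show False using r2 not_less_Least[of "j mod ?d" "\<lambda>j. 0 < j \<and> rotate j xs = xs"]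
        unfolding rper_def by blast
    qed
  next
    assume "rper xs dvd j"
    then obtain k where "j = k * rper xs" by (metis dvd_def mult.commute)
    thus "rotate j xs = xs" using rot_mult P by blast
  qed
  thus "\<And>j. rotate j xs = xs \<longleftrightarrow> rper xs dvd j" by blast
  show "rper xs dvd length xs" using iff[of "length xs"] by simp
qed

lemma prim_iff_rper:
  assumes "xs \<noteq> []"
  shows "(\<forall>j. 0<j \<and> j<length xs \<longrightarrow> rotate j xs \<noteq> xs) \<longleftrightarrow> rper xs = length xs"
proof
  assume H: "\<forall>j. 0<j \<and> j<length xs \<longrightarrow> rotate j xs \<noteq> xs"
  have "rper xs \<le> length xs" using rper_props(3)[OF assms] assms by (auto intro: dvd_imp_le)
  thus "rper xs = length xs" using H rper_props(1,2)[OF assms] le_neq_implies_less by blast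
next
  assume "rper xs = length xs"
  thus "\<forall>j. 0<j \<and> j<length xs \<longrightarrow> rotate j xs \<noteq> xs"
    using rper_props(4)[OF assms] by (metis dvd_imp_le not_le)
qed

lemma nth_concat_replicate:
  assumes "length u = p" "i < q*p"
  shows "concat (replicate q u) ! i = u ! (i mod p)"
  using assms(2)
proof (induction q arbitrary: i)
  case (Suc q)
  show ?case
  proof (cases "i < p")
    case True thus ?thesis using assms by (simp add: nth_append)
  next
    case False
    hence "concat (replicate (Suc q) u) ! i = concat (replicate q u) ! (i - p)"
      using assms by (simp add: nth_append)
    also have "\<dots> = u ! ((i - p) mod p)" using Suc False by (intro Suc.IH) auto
    also have "(i - p) mod p = i mod p" using False by (simp add: le_mod_geq)
    finally show ?thesis .
  qed
qed simp

lemma rot_nth_mod: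
  assumes "rotate p xs = xs" "p > 0" "i < length xs"
  shows "xs ! i = xs ! (i mod p)"
  using assms(3)
proof (induction i rule: less_induct)
  case (less i)
  show ?case
  proof (cases "i < p")
    case True thus ?thesis by simp
  next
    case False
    have "xs ! (i - p) = rotate p xs ! (i - p)" using assms by simp
    also have "\<dots> = xs ! ((p + (i - p)) mod length xs)" using less False by (simp add: nth_rotate)
    also have "\<dots> = xs ! i" using less False by simp
    finally have "xs ! i = xs ! (i - p)" by simp
    also have "\<dots> = xs ! ((i - p) mod p)" using less False assms by (intro less.IH) auto
    also have "(i - p) mod p = i mod p" using False by (simp add: le_mod_geq)
    finally show ?thesis .
  qed
qed

lemma rot_power:
  assumes "rotate p xs = xs" "p > 0" "p dvd length xs" "xs \<noteq> []"
  shows "xs = concat (replicate (length xs div p) (take p xs))"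
proof -
  have lp: "p \<le> length xs" using assms(3,4) by (simp add: dvd_imp_le)
  show ?thesis
  proof (rule nth_equalityI)
    show "length xs = length (concat (replicate (length xs div p) (take p xs)))"
      using lp assms by (simp add: length_concat sum_list_replicate min_def)
    fix i assume i: "i < length xs"
    have "concat (replicate (length xs div p) (take p xs)) ! i = take p xs ! (i mod p)"
      using lp assms i by (intro nth_concat_replicate) auto
    also have "\<dots> = xs ! (i mod p)" using assms by simp
    also have "\<dots> = xs ! i" using rot_nth_mod[OF assms(1,2) i] by simp
    finally show "xs ! i = concat (replicate (length xs div p) (take p xs)) ! i" by simp
  qed
qed

lemma power_rot: "rotate (length u) (concat (replicate r u)) = concat (replicate r u)"
proof (cases r)
  case (Suc r')
  have "rotate (length u) (concat (replicate r u)) = concat (replicate r' u) @ u"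
    using Suc by (simp add: rotate_append)
  also have "\<dots> = concat (replicate r' u @ [u])" by simp
  also have "replicate r' u @ [u] = replicate r u" using Suc by (simp add: replicate_append_same)
  finally show ?thesis .
qed simp



lemma circ_iff:
  "is_circuit n a b c \<longleftrightarrow> c \<noteq> [] \<and> set c \<subseteq> bonds n a b \<and>
     (\<forall>j<length c. terminus n (c!j) = origin (c ! (Suc j mod length c)))"
proof
  assume C: "is_circuit n a b c"
  hence ne: "c \<noteq> []" and st: "set c \<subseteq> bonds n a b"
    and cons: "\<And>j. Suc j < length c \<Longrightarrow> terminus n (c ! j) = origin (c ! Suc j)"
    and cl: "terminus n (last c) = origin (hd c)"
    unfolding is_circuit_def is_path_def by auto
  have "terminus n (c!j) = origin (c ! (Suc j mod length c))" if j: "j < length c" for j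
  proof (cases "Suc j < length c")
    case True thus ?thesis using cons by simp
  next
    case False
    hence sj: "Suc j = length c" using j by simp
    hence "j = length c - 1" "Suc j mod length c = 0" by auto
    thus ?thesis using cl ne by (simp add: last_conv_nth hd_conv_nth)
  qed
  thus "c \<noteq> [] \<and> set c \<subseteq> bonds n a b \<and>
     (\<forall>j<length c. terminus n (c!j) = origin (c ! (Suc j mod length c)))" using ne st by auto
next
  assume H: "c \<noteq> [] \<and> set c \<subseteq> bonds n a b \<and>
     (\<forall>j<length c. terminus n (c!j) = origin (c ! (Suc j mod length c)))"
  have "terminus n (c ! j) = origin (c ! Suc j)" if "Suc j < length c" for j
    using H that by (metis Suc_lessD mod_less)
  moreover have "terminus n (last c) = origin (hd c)"
  proof -
    have "length c - 1 < length c" "Suc (length c - 1) mod length c = 0" using H by auto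
    thus ?thesis using H by (metis last_conv_nth hd_conv_nth)
  qed
  ultimately show "is_circuit n a b c" using H unfolding is_circuit_def is_path_def by auto
qed

lemma circ_rotate:
  assumes "is_circuit n a b c"
  shows "is_circuit n a b (rotate k c)"
proof -
  let ?L = "length c"
  have H: "c \<noteq> []" "set c \<subseteq> bonds n a b"
    "\<And>j. j<?L \<Longrightarrow> terminus n (c!j) = origin (c ! (Suc j mod ?L))"
    using assms unfolding circ_iff by auto
  have "terminus n (rotate k c ! j) = origin (rotate k c ! (Suc j mod ?L))" if j: "j < ?L" for j
  proof -
    have L0: "?L > 0" using H by simp
    have "rotate k c ! j = c ! ((k + j) mod ?L)" using j by (simp add: nth_rotate)
    moreover have "rotate k c ! (Suc j mod ?L) = c ! ((k + Suc j mod ?L) mod ?L)"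
      using L0 by (simp add: nth_rotate)
    moreover have "(k + Suc j mod ?L) mod ?L = Suc ((k + j) mod ?L) mod ?L"
      by (simp add: mod_add_right_eq mod_Suc_eq)
    moreover have "(k + j) mod ?L < ?L" using L0 by simp
    ultimately show ?thesis using H(3) by simp
  qed
  thus ?thesis using H unfolding circ_iff by simp
qed

lemma circ_take:
  assumes "is_circuit n a b c" "rotate p c = c" "0 < p" "p dvd length c"
  shows "is_circuit n a b (take p c)"
proof -
  let ?L = "length c"
  have H: "c \<noteq> []" "set c \<subseteq> bonds n a b"
    "\<And>j. j<?L \<Longrightarrow> terminus n (c!j) = origin (c ! (Suc j mod ?L))"
    using assms unfolding circ_iff by auto
  have pL: "p \<le> ?L" using assms H by (simp add: dvd_imp_le)
  have "terminus n (take p c ! j) = origin (take p c ! (Suc j mod p))" if j: "j < p" for j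
  proof -
    have "take p c ! j = c ! j" using j by simp
    moreover have "take p c ! (Suc j mod p) = c ! (Suc j mod p)" using assms by simp
    moreover have "c ! (Suc j mod ?L) = c ! ((Suc j mod ?L) mod p)"
      using rot_nth_mod[OF assms(2,3)] H by simp
    moreover have "(Suc j mod ?L) mod p = Suc j mod p" using assms(4) by (simp add: mod_mod_cancel)
    ultimately show ?thesis using H(3)[of j] j pL by simp
  qed
  moreover have "set (take p c) \<subseteq> bonds n a b" using H by (meson order_trans set_take_subset)
  moreover have "take p c \<noteq> []" using H assms by simp
  ultimately show ?thesis unfolding circ_iff using pL by (simp add: min_def)
qed

lemma circ_power:
  assumes "is_circuit n a b u" "0 < m"
  shows "is_circuit n a b (concat (replicate m u))"
proof -
  let ?L = "length u" and ?c = "concat (replicate m u)"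
  have H: "u \<noteq> []" "set u \<subseteq> bonds n a b"
    "\<And>j. j<?L \<Longrightarrow> terminus n (u!j) = origin (u ! (Suc j mod ?L))"
    using assms unfolding circ_iff by auto
  have len: "length ?c = m * ?L" by (simp add: length_concat sum_list_replicate)
  have L0: "?L > 0" using H by simp
  have "terminus n (?c ! j) = origin (?c ! (Suc j mod length ?c))" if j: "j < length ?c" for j
  proof -
    have e1: "?c ! j = u ! (j mod ?L)" using j len by (intro nth_concat_replicate) auto
    have pos: "0 < length ?c" using L0 assms(2) len by simp
    have "?c ! (Suc j mod length ?c) = u ! ((Suc j mod length ?c) mod ?L)"
      using pos len by (intro nth_concat_replicate) auto
    moreover have "(Suc j mod length ?c) mod ?L = Suc (j mod ?L) mod ?L"
      using len by (simp add: mod_mod_cancel mod_Suc_eq)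
    ultimately show ?thesis using H(3)[of "j mod ?L"] L0 e1 \<open>?c ! (Suc j mod length ?c) = _\<close> by simp
  qed
  moreover have "set ?c \<subseteq> bonds n a b" using H assms by simp
  moreover have "?c \<noteq> []" using H assms by simp
  ultimately show ?thesis unfolding circ_iff by blast
qed

lemma orbit_rot: "orbit (rotate k c) = orbit c"
proof (cases "c = []")
  case True thus ?thesis by simp
next
  case False
  let ?L = "length c"
  have c_eq: "c = rotate (?L - k mod ?L) (rotate k c)"
  proof -
    have "rotate (?L - k mod ?L) (rotate k c) = rotate (?L - k mod ?L + k) c" by (simp add: rotate_rotate)
    also have "\<dots> = c"
    proof (rule rotate_id)
      have "k mod ?L < ?L" using False by simp
      hence "(?L - k mod ?L + k) = ?L + (k div ?L) * ?L"
        using div_mult_mod_eq[of k ?L] by linarith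
      thus "(?L - k mod ?L + k) mod ?L = 0" by simp
    qed
    finally show ?thesis by simp
  qed
  show ?thesis
  proof
    show "orbit (rotate k c) \<subseteq> orbit c"
      unfolding orbit_def by (auto simp: rotate_rotate)
    show "orbit c \<subseteq> orbit (rotate k c)"
    proof
      fix x assume "x \<in> orbit c"
      then obtain j where "x = rotate j c" unfolding orbit_def by auto
      hence "x = rotate (j + (?L - k mod ?L)) (rotate k c)"
        using c_eq by (metis rotate_rotate)
      thus "x \<in> orbit (rotate k c)" unfolding orbit_def by auto
    qed
  qed
qed

lemma orbit_mem: "x \<in> orbit c \<Longrightarrow> orbit x = orbit c"
  unfolding orbit_def using orbit_rot unfolding orbit_def by blast

lemma self_orbit: "c \<in> orbit c"
  unfolding orbit_def by (auto intro: exI[of _ 0])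

lemma prim_orbit_iff:
  assumes "is_circuit n a b c"
  shows "primitive_orbit n a b (orbit c) \<longleftrightarrow> (\<forall>j. 0<j \<and> j<length c \<longrightarrow> rotate j c \<noteq> c)"
proof
  assume P: "primitive_orbit n a b (orbit c)"
  show "\<forall>j. 0<j \<and> j<length c \<longrightarrow> rotate j c \<noteq> c"
  proof (rule ccontr)
    assume "\<not> ?thesis"
    then obtain j where j: "0<j" "j<length c" "rotate j c = c" by auto
    have ne: "c \<noteq> []" using assms unfolding circ_iff by auto
    let ?p = "rper c"
    note R = rper_props[OF ne]
    have "?p dvd j" using R(4) j by simp
    hence pj: "?p \<le> j" using j by (simp add: dvd_imp_le)
    have c0: "is_circuit n a b (take ?p c)" using circ_take[OF assms R(2) R(1) R(3)] .
    have ceq: "c = concat (replicate (length c div ?p) (take ?p c))"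
      using rot_power[OF R(2) R(1) R(3) ne] .
    have r1: "length c div ?p > 1"
    proof -
      obtain q where q: "length c = ?p * q" using R(3) by (auto elim: dvdE)
      have "q \<noteq> 0" using q j by (metis mult_0_right not_less0)
      moreover have "q \<noteq> 1" using q j pj by auto
      ultimately have "q \<noteq> 0" "q \<noteq> 1" by auto
      thus ?thesis using q R(1) by simp
    qed
    have "orbit c = orbit (concat (replicate (length c div ?p) (take ?p c)))"
      using arg_cong[OF ceq, of orbit] .
    thus False using P c0 r1 unfolding primitive_orbit_def by blast
  qed
next
  assume H: "\<forall>j. 0<j \<and> j<length c \<longrightarrow> rotate j c \<noteq> c"
  show "primitive_orbit n a b (orbit c)"
    unfolding primitive_orbit_def
  proof
    assume "\<exists>c0 r. is_circuit n a b c0 \<and> r > 1 \<and> orbit c = orbit (concat (replicate r c0))"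
    then obtain c0 r where cr: "is_circuit n a b c0" "r > 1" "orbit c = orbit (concat (replicate r c0))"
      by auto
    let ?X = "concat (replicate r c0)"
    have "c \<in> orbit ?X" using cr(3) self_orbit[of c] by simp
    then obtain k where k: "c = rotate k ?X" unfolding orbit_def by auto
    have l0: "length c0 > 0" using cr unfolding circ_iff by auto
    have lc: "length c = r * length c0" using k by (simp add: length_concat sum_list_replicate)
    have "rotate (length c0) c = rotate k (rotate (length c0) ?X)"
      using k by (simp add: rotate_rotate add.commute)
    also have "\<dots> = c" using k power_rot[of c0 r] by simp
    finally have "rotate (length c0) c = c" .
    moreover have "length c0 < length c" using lc cr l0 by simp
    ultimately show False using H l0 by blast
  qed
qed

lemma card_orbit:
  assumes "c \<noteq> []" "\<forall>j. 0<j \<and> j<length c \<longrightarrow> rotate j c \<noteq> c"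
  shows "card (orbit c) = length c"
proof -
  let ?L = "length c"
  have im: "orbit c = (\<lambda>k. rotate k c) ` {..<?L}"
  proof
    show "orbit c \<subseteq> (\<lambda>k. rotate k c) ` {..<?L}"
    proof
      fix x assume "x \<in> orbit c"
      then obtain k where "x = rotate k c" unfolding orbit_def by auto
      hence "x = rotate (k mod ?L) c" by (metis rotate_conv_mod)
      moreover have "k mod ?L < ?L" using assms by simp
      ultimately show "x \<in> (\<lambda>k. rotate k c) ` {..<?L}" by auto
    qed
  qed (auto simp: orbit_def)
  have inj: "inj_on (\<lambda>k. rotate k c) {..<?L}"
  proof (rule inj_onI, rule ccontr)
    fix i j assume ij: "i \<in> {..<?L}" "j \<in> {..<?L}" "rotate i c = rotate j c" "i \<noteq> j"
    have gen: "rotate (y - x) c = c" if "x < y" "y < ?L" "rotate x c = rotate y c" for x y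
    proof -
      have "rotate (?L - x) (rotate x c) = rotate (?L - x) (rotate y c)" using that by simp
      hence "rotate (?L - x + x) c = rotate (?L - x + y) c" by (simp add: rotate_rotate)
      moreover have "rotate (?L - x + x) c = c" using that by (intro rotate_id) simp
      moreover have "(?L - x + y) mod ?L = (y - x) mod ?L"
      proof -
        have "?L - x + y = (y - x) + ?L" using that by simp
        thus ?thesis by simp
      qed
      hence "rotate (?L - x + y) c = rotate (y - x) c"
        using rotate_conv_mod[of "?L - x + y" c] rotate_conv_mod[of "y - x" c] by simp
      ultimately show ?thesis by simp
    qed
    show False
    proof (cases "i < j")
      case True
      then show ?thesis using gen[of i j] ij assms(2) by auto
    next
      case False
      hence "j < i" using ij by simp
      then show ?thesis using gen[of j i] ij assms(2) by auto
    qed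
  qed
  show ?thesis using im inj by (simp add: card_image)
qed



definition Circs :: "nat \<Rightarrow> nat \<Rightarrow> nat \<Rightarrow> nat \<Rightarrow> (nat \<times> nat) list set" where
  "Circs n a b L = {c. is_circuit n a b c \<and> length c = L}"

definition Prims :: "nat \<Rightarrow> nat \<Rightarrow> nat \<Rightarrow> nat \<Rightarrow> (nat \<times> nat) list set" where
  "Prims n a b L = {c. is_circuit n a b c \<and> length c = L \<and> (\<forall>j. 0<j \<and> j<L \<longrightarrow> rotate j c \<noteq> c)}"

lemma finite_Circs: "finite (Circs n a b L)"
proof -
  have fb: "finite (bonds n a b)"
    by (rule finite_subset[of _ "{..<n} \<times> {a,b}"]) (auto simp: bonds_def)
  have "Circs n a b L \<subseteq> {xs. set xs \<subseteq> bonds n a b \<and> length xs = L}"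
    unfolding Circs_def circ_iff by auto
  thus ?thesis using finite_lists_length_eq[OF fb] by (rule finite_subset)
qed

lemma prim_orbits_eq: "prim_orbits n a b l = orbit ` Prims n a b l"
  unfolding prim_orbits_def Prims_def using prim_orbit_iff by blast

lemma card_prim_orbits: "l * card (prim_orbits n a b l) = card (Prims n a b l)"
proof -
  let ?P = "Prims n a b l"
  have finP: "finite ?P"
    by (rule finite_subset[OF _ finite_Circs[of n a b l]]) (auto simp: Prims_def Circs_def)
  have sub: "orbit c \<subseteq> ?P" if c: "c \<in> ?P" for c
  proof
    fix x assume "x \<in> orbit c"
    then obtain k where k: "x = rotate k c" unfolding orbit_def by auto
    have cc: "is_circuit n a b c" using c by (simp add: Prims_def)
    have xc: "is_circuit n a b x" using k circ_rotate[OF cc] by simp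
    have "primitive_orbit n a b (orbit c)" using c prim_orbit_iff[OF cc] by (simp add: Prims_def)
    hence "primitive_orbit n a b (orbit x)" using k orbit_rot by simp
    hence "\<forall>j. 0<j \<and> j<length x \<longrightarrow> rotate j x \<noteq> x" using prim_orbit_iff[OF xc] by simp
    moreover have "length x = l" using k c by (simp add: Prims_def)
    ultimately show "x \<in> ?P" using xc by (simp add: Prims_def)
  qed
  have U: "\<Union>(orbit ` ?P) = ?P" using sub self_orbit by blast
  have cardo: "card (orbit c) = l" if c: "c \<in> ?P" for c
  proof -
    have "c \<noteq> []" using c by (auto simp: Prims_def circ_iff)
    thus ?thesis using c card_orbit[of c] by (simp add: Prims_def)
  qed
  have disj0: "orbit x \<inter> orbit y = {}" if "orbit x \<noteq> orbit y" for x y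
  proof (rule equals0I)
    fix z assume "z \<in> orbit x \<inter> orbit y"
    hence "orbit z = orbit x" "orbit z = orbit y" using orbit_mem by auto
    thus False using that by simp
  qed
  have disj: "\<forall>c1\<in>orbit ` ?P. \<forall>c2\<in>orbit ` ?P. c1 \<noteq> c2 \<longrightarrow> c1 \<inter> c2 = {}"
    using disj0 by blast
  have "l * card (orbit ` ?P) = card (\<Union>(orbit ` ?P))"
  proof (rule card_partition)
    show "finite (orbit ` ?P)" using finP by simp
    show "finite (\<Union>(orbit ` ?P))" using finP U by simp
    show "\<And>c. c \<in> orbit ` ?P \<Longrightarrow> card c = l" using cardo by auto
    show "\<And>c1 c2. c1 \<in> orbit ` ?P \<Longrightarrow> c2 \<in> orbit ` ?P \<Longrightarrow> c1 \<noteq> c2 \<Longrightarrow> c1 \<inter> c2 = {}"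
      using disj0 by auto
  qed
  thus ?thesis using U prim_orbits_eq by simp
qed

lemma take_concat_replicate: "0 < m \<Longrightarrow> take (length u) (concat (replicate m u)) = u"
  by (cases m) auto

lemma card_fix:
  assumes "m > 0" "m dvd l" "l \<ge> 1"
  shows "card {c\<in>Circs n a b l. rotate (l div m) c = c} = card (Circs n a b (l div m))"
proof -
  let ?L = "l div m"
  obtain q where q: "l = m * q" using assms(2) by (auto elim: dvdE)
  have Lq: "?L = q" using q assms(1) by simp
  have L0: "?L > 0" using assms(3) q Lq by (cases q) auto
  have Ll: "?L dvd l" using q Lq by simp
  have lm: "l div ?L = m" using q Lq L0 by simp
  have "bij_betw (take ?L) {c\<in>Circs n a b l. rotate ?L c = c} (Circs n a b ?L)"
  proof (rule bij_betw_byWitness[where f'="\<lambda>u. concat (replicate m u)"])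
    show "\<forall>c\<in>{c\<in>Circs n a b l. rotate ?L c = c}. concat (replicate m (take ?L c)) = c"
    proof
      fix c assume c: "c \<in> {c\<in>Circs n a b l. rotate ?L c = c}"
      hence "c \<noteq> []" "length c = l" "rotate ?L c = c" by (auto simp: Circs_def circ_iff)
      thus "concat (replicate m (take ?L c)) = c" using rot_power[of ?L c] L0 Ll lm by simp
    qed
    show "\<forall>u\<in>Circs n a b ?L. take ?L (concat (replicate m u)) = u"
    proof
      fix u assume "u \<in> Circs n a b ?L"
      hence "length u = ?L" by (simp add: Circs_def)
      thus "take ?L (concat (replicate m u)) = u" using take_concat_replicate[of m u] assms(1) by simp
    qed
    show "take ?L ` {c\<in>Circs n a b l. rotate ?L c = c} \<subseteq> Circs n a b ?L"
    proof
      fix x assume "x \<in> take ?L ` {c\<in>Circs n a b l. rotate ?L c = c}"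
      then obtain c where c: "c \<in> Circs n a b l" "rotate ?L c = c" "x = take ?L c" by auto
      have "is_circuit n a b x" using circ_take[of n a b c ?L] c L0 Ll by (simp add: Circs_def)
      moreover have "length x = min l ?L" using c by (simp add: Circs_def)
      hence "length x = ?L" by (metis min.absorb2 div_le_dividend)
      ultimately show "x \<in> Circs n a b ?L" by (simp add: Circs_def)
    qed
    show "(\<lambda>u. concat (replicate m u)) ` Circs n a b ?L \<subseteq> {c\<in>Circs n a b l. rotate ?L c = c}"
    proof
      fix x assume "x \<in> (\<lambda>u. concat (replicate m u)) ` Circs n a b ?L"
      then obtain u where u: "u \<in> Circs n a b ?L" "x = concat (replicate m u)" by auto
      have "is_circuit n a b x" using circ_power[of n a b u m] u assms by (simp add: Circs_def)
      moreover have "length x = l" using u assms by (simp add: Circs_def length_concat sum_list_replicate)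
      moreover have "rotate ?L x = x" using u power_rot[of u m] by (simp add: Circs_def)
      ultimately show "x \<in> {c\<in>Circs n a b l. rotate ?L c = c}" by (simp add: Circs_def)
    qed
  qed
  thus ?thesis by (rule bij_betw_same_card)
qed

lemma dvd_swap_aux:
  fixes d m l :: nat
  assumes "d > 0" "m > 0" "d dvd l" "m dvd l"
  shows "d dvd (l div m) \<longleftrightarrow> m dvd (l div d)"
proof -
  obtain e where e: "l = d * e" using assms by (auto elim: dvdE)
  obtain q where q: "l = m * q" using assms by (auto elim: dvdE)
  have ld: "l div d = e" "l div m = q" using e q assms by auto
  show ?thesis unfolding ld
  proof
    assume "d dvd q" then obtain x where "q = d * x" by (auto elim: dvdE)
    hence "d * e = d * (m * x)" using e q by (metis mult.left_commute)
    hence "e = m * x" using assms(1) by (metis mult_left_cancel not_gr0)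
    thus "m dvd e" by simp
  next
    assume "m dvd e" then obtain x where "e = m * x" by (auto elim: dvdE)
    hence "m * q = m * (d * x)" using e q by (metis mult.left_commute)
    hence "q = d * x" using assms(2) by (metis mult_left_cancel not_gr0)
    thus "d dvd q" by simp
  qed
qed

lemma card_Prims_moebius:
  assumes "l \<ge> 1"
  shows "int (card (Prims n a b l)) =
    (\<Sum>m\<in>{m. m>0 \<and> m dvd l}. moebius m * int (card (Circs n a b (l div m))))"
proof -
  let ?C = "Circs n a b l" and ?D = "{m. m>0 \<and> m dvd l}"
  have finD: "finite ?D"
    by (rule finite_subset[of _ "{..l}"]) (use assms in \<open>auto dest: dvd_imp_le\<close>)
  have ne: "c \<noteq> []" if "c \<in> ?C" for c using that assms by (auto simp: Circs_def circ_iff)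
  have Pe: "Prims n a b l = {c\<in>?C. l div rper c = 1}"
  proof -
    have "(\<forall>j. 0<j \<and> j<l \<longrightarrow> rotate j c \<noteq> c) \<longleftrightarrow> l div rper c = 1" if c: "c \<in> ?C" for c
    proof -
      have lc: "length c = l" using c by (simp add: Circs_def)
      note R = rper_props[OF ne[OF c]]
      have "l div rper c = 1 \<longleftrightarrow> rper c = l"
        using R(1,3) lc by (metis div_self dvd_mult_div_cancel nat_mult_1_right neq0_conv)
      thus ?thesis using prim_iff_rper[OF ne[OF c]] lc by simp
    qed
    thus ?thesis unfolding Prims_def Circs_def by auto
  qed
  have "int (card (Prims n a b l)) = (\<Sum>c\<in>?C. if l div rper c = 1 then 1 else 0)"
    unfolding Pe using finite_Circs by (simp add: sum.If_cases Int_def)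
  also have "\<dots> = (\<Sum>c\<in>?C. \<Sum>m\<in>{m. m>0 \<and> m dvd (l div rper c)}. moebius m)"
  proof (rule sum.cong[OF refl])
    fix c assume c: "c \<in> ?C"
    note R = rper_props[OF ne[OF c]]
    have "l div rper c > 0" using R(1,3) assms c
      by (simp add: Circs_def div_greater_zero_iff dvd_imp_le)
    thus "(if l div rper c = 1 then 1 else 0) = (\<Sum>m\<in>{m. m>0 \<and> m dvd (l div rper c)}. moebius m)"
      using moebius_sum by simp
  qed
  also have "\<dots> = (\<Sum>c\<in>?C. \<Sum>m\<in>?D. if m dvd (l div rper c) then moebius m else 0)"
  proof (rule sum.cong[OF refl])
    fix c assume c: "c \<in> ?C"
    note R = rper_props[OF ne[OF c]]
    have lc: "length c = l" using c by (simp add: Circs_def)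
    have dl: "l div rper c dvd l" using R(3) lc by (metis dvd_mult_div_cancel dvd_triv_right)
    have sub: "{m. m>0 \<and> m dvd (l div rper c)} = {m\<in>?D. m dvd (l div rper c)}"
      using dl by (auto intro: dvd_trans)
    show "(\<Sum>m\<in>{m. m>0 \<and> m dvd (l div rper c)}. moebius m) =
          (\<Sum>m\<in>?D. if m dvd (l div rper c) then moebius m else 0)"
      unfolding sub using sum.inter_filter[OF finD, where g=moebius and P="\<lambda>m. m dvd l div rper c"] by simp
  qed
  also have "\<dots> = (\<Sum>m\<in>?D. \<Sum>c\<in>?C. if m dvd (l div rper c) then moebius m else 0)"
    by (rule sum.swap)
  also have "\<dots> = (\<Sum>m\<in>?D. moebius m * int (card {c\<in>?C. m dvd (l div rper c)}))"
    using finite_Circs by (simp add: sum.If_cases Int_def mult.commute)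
  also have "\<dots> = (\<Sum>m\<in>?D. moebius m * int (card {c\<in>?C. rotate (l div m) c = c}))"
  proof (rule sum.cong[OF refl])
    fix m assume m: "m \<in> ?D"
    have "{c\<in>?C. m dvd (l div rper c)} = {c\<in>?C. rotate (l div m) c = c}"
    proof (rule Collect_cong, rule conj_cong[OF refl])
      fix c assume c: "c \<in> ?C"
      note R = rper_props[OF ne[OF c]]
      have lc: "length c = l" using c by (simp add: Circs_def)
      show "m dvd (l div rper c) \<longleftrightarrow> rotate (l div m) c = c"
        using R(4)[of "l div m"] dvd_swap_aux[of "rper c" m l] R(1,3) lc m by simp
    qed
    thus "moebius m * int (card {c\<in>?C. m dvd (l div rper c)}) =
          moebius m * int (card {c\<in>?C. rotate (l div m) c = c})" by simp
  qed
  also have "\<dots> = (\<Sum>m\<in>?D. moebius m * int (card (Circs n a b (l div m))))"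
    using card_fix assms by simp
  finally show ?thesis .
qed



definition st :: "nat \<Rightarrow> nat \<Rightarrow> nat set \<Rightarrow> nat \<Rightarrow> nat" where
  "st a b S i = (if i \<in> S then b else a)"

definition Ws :: "nat \<Rightarrow> nat \<Rightarrow> nat \<Rightarrow> nat \<Rightarrow> nat set set" where
  "Ws n a b L = {S. S \<subseteq> {..<L} \<and> n dvd ((L - card S) * a + card S * b)}"

definition gl :: "nat \<Rightarrow> nat \<Rightarrow> nat \<Rightarrow> nat \<Rightarrow> nat \<times> nat set \<Rightarrow> (nat \<times> nat) list" where
  "gl n a b L vS = map (\<lambda>j. ((fst vS + (\<Sum>i<j. st a b (snd vS) i)) mod n, st a b (snd vS) j)) [0..<L]"

lemma sum_st:
  assumes "S \<subseteq> {..<L}"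
  shows "(\<Sum>i<L. st a b S i) = (L - card S) * a + card S * b"
proof -
  have fin: "finite S" using assms finite_subset by blast
  have "(\<Sum>i<L. st a b S i) = (\<Sum>i\<in>{..<L} \<inter> S. b) + (\<Sum>i\<in>{..<L} - S. a)"
    unfolding st_def by (simp add: sum.If_cases Diff_eq)
  also have "{..<L} \<inter> S = S" using assms by auto
  also have "card ({..<L} - S) = L - card S" using assms fin by (simp add: card_Diff_subset)
  hence "(\<Sum>i\<in>{..<L} - S. a) = (L - card S) * a" by simp
  finally show ?thesis by simp
qed

lemma origin_formula:
  assumes "is_circuit n a b c" "j < length c"
  shows "origin (c ! j) = (origin (c ! 0) + (\<Sum>i<j. snd (c ! i))) mod n"
  using assms(2)
proof (induction j)
  case 0
  have "set c \<subseteq> bonds n a b" "c \<noteq> []" using assms unfolding circ_iff by auto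
  hence "c ! 0 \<in> bonds n a b" by (meson nth_mem subsetD length_greater_0_conv)
  hence "origin (c!0) < n" by (auto simp: bonds_def origin_def)
  thus ?case by simp
next
  case (Suc j)
  have "origin (c ! Suc j) = terminus n (c ! j)"
    using assms(1) Suc.prems unfolding is_circuit_def is_path_def by auto
  also have "\<dots> = (origin (c ! j) + snd (c ! j)) mod n" by (simp add: terminus_def origin_def)
  also have "\<dots> = ((origin (c ! 0) + (\<Sum>i<j. snd (c ! i))) mod n + snd (c ! j)) mod n"
    using Suc by simp
  also have "\<dots> = (origin (c ! 0) + (\<Sum>i<Suc j. snd (c ! i))) mod n"
    by (simp add: mod_add_left_eq add.assoc)
  finally show ?case .
qed

lemma card_Circs:
  assumes "L \<ge> 1" "n \<ge> 1" "a \<noteq> b"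
  shows "card (Circs n a b L) = n * card (Ws n a b L)"
proof -
  define f where "f = (\<lambda>c::(nat\<times>nat) list. (origin (hd c), {i. i < L \<and> snd (c ! i) = b}))"
  have inC: "c ! i \<in> bonds n a b" if "c \<in> Circs n a b L" "i < L" for c i
  proof -
    have "set c \<subseteq> bonds n a b" "length c = L" using that(1) unfolding Circs_def circ_iff by auto
    thus ?thesis using that(2) by (meson nth_mem subsetD)
  qed
  have snd_st: "snd (c ! i) = st a b {i. i < L \<and> snd (c ! i) = b} i"
    if "c \<in> Circs n a b L" "i < L" for c i
    using inC[OF that] that(2) by (auto simp: bonds_def st_def)
  have "bij_betw f (Circs n a b L) ({..<n} \<times> Ws n a b L)"
  proof (rule bij_betw_byWitness[where f'="gl n a b L"])
    show "\<forall>c\<in>Circs n a b L. gl n a b L (f c) = c"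
    proof
      fix c assume c: "c \<in> Circs n a b L"
      have cc: "is_circuit n a b c" and lc: "length c = L" using c by (auto simp: Circs_def)
      have ne: "c \<noteq> []" using cc by (simp add: circ_iff)
      show "gl n a b L (f c) = c"
      proof (rule nth_equalityI)
        show "length (gl n a b L (f c)) = length c" using lc by (simp add: gl_def)
        fix j assume "j < length (gl n a b L (f c))"
        hence j: "j < L" by (simp add: gl_def)
        have "(\<Sum>i<j. st a b {i. i < L \<and> snd (c ! i) = b} i) = (\<Sum>i<j. snd (c ! i))"
          using snd_st[OF c] j by simp
        hence "gl n a b L (f c) ! j = (origin (c ! j), snd (c ! j))"
          using origin_formula[OF cc, of j] j lc snd_st[OF c j] ne
          by (simp add: gl_def f_def hd_conv_nth)
        thus "gl n a b L (f c) ! j = c ! j" by (simp add: origin_def)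
      qed
    qed
    show "\<forall>vS\<in>{..<n} \<times> Ws n a b L. f (gl n a b L vS) = vS"
    proof
      fix vS assume vS: "vS \<in> {..<n} \<times> Ws n a b L"
      obtain v S where vSe: "vS = (v, S)" by (cases vS)
      have v: "v < n" and S: "S \<subseteq> {..<L}" using vS vSe by (auto simp: Ws_def)
      have "origin (hd (gl n a b L vS)) = v"
        using assms v vSe by (simp add: gl_def origin_def hd_map upt_conv_Cons)
      moreover have "{i. i < L \<and> snd (gl n a b L vS ! i) = b} = S"
        using S vSe assms(3) by (auto simp: gl_def st_def split: if_splits)
      ultimately show "f (gl n a b L vS) = vS" using vSe by (simp add: f_def)
    qed
    show "f ` Circs n a b L \<subseteq> {..<n} \<times> Ws n a b L"
    proof
      fix x assume "x \<in> f ` Circs n a b L"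
      then obtain c where c: "c \<in> Circs n a b L" "x = f c" by auto
      have cc: "is_circuit n a b c" and lc: "length c = L" using c by (auto simp: Circs_def)
      have ne: "c \<noteq> []" using cc by (simp add: circ_iff)
      define S where "S = {i. i < L \<and> snd (c ! i) = b}"
      define v where "v = origin (c ! 0)"
      have hd: "hd c = c ! 0" using ne by (simp add: hd_conv_nth)
      have vn: "v < n" using inC[OF c(1), of 0] assms by (auto simp: v_def bonds_def origin_def)
      have SL: "S \<subseteq> {..<L}" by (auto simp: S_def)
      have Lm: "L - 1 < L" "Suc (L - 1) mod L = 0" "Suc (L - 1) = L" using assms by auto
      have "terminus n (c ! (L - 1)) = origin (c ! 0)"
        using cc lc Lm unfolding circ_iff by metis
      hence "((origin (c ! 0) + (\<Sum>i<L - 1. snd (c ! i))) mod n + snd (c ! (L - 1))) mod n = v"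
        using origin_formula[OF cc, of "L - 1"] lc Lm by (simp add: terminus_def origin_def v_def)
      hence "(v + (\<Sum>i<L. snd (c ! i))) mod n = v"
        using Lm by (simp add: mod_add_left_eq add.assoc v_def flip: lessThan_Suc)
         (metis add.assoc lessThan_Suc sum.lessThan_Suc)
      moreover have "(\<Sum>i<L. snd (c ! i)) = (\<Sum>i<L. st a b S i)"
        using snd_st[OF c(1)] unfolding S_def by simp
      ultimately have "(v + ((L - card S) * a + card S * b)) mod n = v mod n"
        using sum_st[OF SL] vn by simp
      hence "n dvd ((L - card S) * a + card S * b)"
        using mod_eq_dvd_iff_nat[of v "v + ((L - card S) * a + card S * b)" n] by simp
      thus "x \<in> {..<n} \<times> Ws n a b L"
        using c vn SL by (simp add: f_def Ws_def S_def v_def hd)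
    qed
    show "gl n a b L ` ({..<n} \<times> Ws n a b L) \<subseteq> Circs n a b L"
    proof
      fix x assume "x \<in> gl n a b L ` ({..<n} \<times> Ws n a b L)"
      then obtain v S where vS: "v < n" "S \<in> Ws n a b L" "x = gl n a b L (v, S)" by auto
      have SL: "S \<subseteq> {..<L}" and dv: "n dvd (\<Sum>i<L. st a b S i)"
        using vS sum_st[of S L a b] by (auto simp: Ws_def)
      have lx: "length x = L" using vS by (simp add: gl_def)
      have xn: "x ! j = ((v + (\<Sum>i<j. st a b S i)) mod n, st a b S j)" if "j < L" for j
        using vS that by (simp add: gl_def)
      have "x \<noteq> []" using lx assms by auto
      moreover have "set x \<subseteq> bonds n a b"
      proof
        fix e assume "e \<in> set x"
        then obtain j where "j < L" "e = x ! j" using lx by (auto simp: in_set_conv_nth)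
        thus "e \<in> bonds n a b" using xn assms by (auto simp: bonds_def st_def)
      qed
      moreover have "terminus n (x ! j) = origin (x ! (Suc j mod L))" if j: "j < L" for j
      proof -
        have t: "terminus n (x ! j) = (v + (\<Sum>i<Suc j. st a b S i)) mod n"
          using xn[OF j] by (simp add: terminus_def mod_add_left_eq add.assoc)
        show ?thesis
        proof (cases "Suc j < L")
          case True thus ?thesis using t xn[OF True] by (simp add: origin_def)
        next
          case False
          hence "Suc j = L" using j by simp
          hence "terminus n (x ! j) = (v + (\<Sum>i<L. st a b S i)) mod n" using t by simp
          also have "\<dots> = v"
          proof -
            obtain k where "(\<Sum>i<L. st a b S i) = n * k" using dv by (auto elim: dvdE)
            thus ?thesis using vS(1) by simp
          qed
          finally show ?thesis using xn[of 0] assms vS \<open>Suc j = L\<close> by (simp add: origin_def)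
        qed
      qed
      ultimately show "x \<in> Circs n a b L" using lx by (simp add: Circs_def circ_iff)
    qed
  qed
  hence "card (Circs n a b L) = card ({..<n} \<times> Ws n a b L)" by (rule bij_betw_same_card)
  thus ?thesis by (simp add: card_cartesian_product)
qed



lemma binom_q_card:
  "binom_q (of_nat L) y = of_nat (card {S. S \<subseteq> {..<L} \<and> of_nat (card S) = y})"
proof (cases "y \<in> \<nat>")
  case True
  then obtain J where J: "y = of_nat J" by (auto elim: Nats_cases)
  have "{S. S \<subseteq> {..<L} \<and> of_nat (card S) = y} = {S. S \<subseteq> {..<L} \<and> card S = J}"
    using J by simp
  moreover have "card {S. S \<subseteq> {..<L} \<and> card S = J} = L choose J"
    using n_subsets[of "{..<L}" J] by simp
  ultimately show ?thesis using J by (simp add: binom_q_def)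
next
  case False
  have "{S. S \<subseteq> {..<L} \<and> of_nat (card S) = y} = {}" using False by (auto simp: of_nat_in_Nats)
  thus ?thesis using False by (simp add: binom_q_def)
qed

lemma ceil_le_iff_nat:
  assumes "n > 0"
  shows "\<lceil>of_nat X / (of_nat n :: rat)\<rceil> \<le> z \<longleftrightarrow> of_nat X \<le> of_int z * (of_nat n :: rat)"
  using assms by (simp add: ceiling_le_iff pos_divide_le_eq)

lemma le_floor_iff_nat:
  assumes "n > 0"
  shows "z \<le> \<lfloor>of_nat X / (of_nat n :: rat)\<rfloor> \<longleftrightarrow> of_int z * (of_nat n :: rat) \<le> of_nat X"
  using assms by (simp add: le_floor_iff pos_le_divide_eq)

definition Kq :: "nat \<Rightarrow> nat \<Rightarrow> nat \<Rightarrow> nat \<Rightarrow> int \<Rightarrow> rat" where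
  "Kq n a b L \<omega> = (of_int \<omega> * of_nat n - of_nat L * of_nat a) / (of_nat b - of_nat a)"

definition Iv :: "nat \<Rightarrow> nat \<Rightarrow> nat \<Rightarrow> nat \<Rightarrow> int set" where
  "Iv n a b L = {\<lceil>of_nat (L * a) / (of_nat n :: rat)\<rceil> .. \<lfloor>of_nat (L * b) / (of_nat n :: rat)\<rfloor>}"

lemma sum_binom_Ws:
  assumes "n > 0" "a < b"
  shows "(\<Sum>\<omega>\<in>Iv n a b L. binom_q (of_nat L) (Kq n a b L \<omega>)) = of_nat (card (Ws n a b L))"
proof -
  define A where "A = (\<lambda>\<omega>. {S. S \<subseteq> {..<L} \<and> of_nat (card S) = Kq n a b L \<omega>})"
  have ba: "(of_nat b - of_nat a :: rat) > 0" using assms by simp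
  have finI: "finite (Iv n a b L)" by (simp add: Iv_def)
  have finA: "finite (A \<omega>)" for \<omega>
    by (rule finite_subset[of _ "Pow {..<L}"]) (auto simp: A_def)
  have disj: "A \<omega>1 \<inter> A \<omega>2 = {}" if "\<omega>1 \<noteq> \<omega>2" for \<omega>1 \<omega>2
  proof -
    have "Kq n a b L \<omega>1 \<noteq> Kq n a b L \<omega>2"
    proof
      assume "Kq n a b L \<omega>1 = Kq n a b L \<omega>2"
      hence "of_int \<omega>1 * of_nat n = (of_int \<omega>2 * of_nat n :: rat)"
        using ba by (simp add: Kq_def divide_simps)
      hence "\<omega>1 = \<omega>2" using assms(1) by simp
      thus False using that by simp
    qed
    thus ?thesis by (auto simp: A_def)
  qed
  have U: "(\<Union>\<omega>\<in>Iv n a b L. A \<omega>) = Ws n a b L"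
  proof (intro set_eqI iffI)
    fix S assume "S \<in> (\<Union>\<omega>\<in>Iv n a b L. A \<omega>)"
    then obtain \<omega> where w: "\<omega> \<in> Iv n a b L" "S \<subseteq> {..<L}" "of_nat (card S) = Kq n a b L \<omega>"
      by (auto simp: A_def)
    have JL: "card S \<le> L" using w(2) by (metis card_lessThan card_mono finite_lessThan)
    have "of_nat (card S) * (of_nat b - of_nat a) = (of_int \<omega> * of_nat n - of_nat L * of_nat a :: rat)"
      using w(3) ba by (simp add: Kq_def divide_simps)
    moreover have "(of_nat ((L - card S) * a + card S * b) :: rat) = (of_nat L - of_nat (card S)) * of_nat a + of_nat (card S) * of_nat b"
      using JL by (simp add: of_nat_diff)
    ultimately have "of_int \<omega> * of_nat n = (of_nat ((L - card S) * a + card S * b) :: rat)"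
      by (simp add: algebra_simps)
    hence "\<omega> * int n = int ((L - card S) * a + card S * b)"
      by (metis (mono_tags) of_int_of_nat_eq of_int_eq_iff of_int_mult)
    hence "int n dvd int ((L - card S) * a + card S * b)" by (metis dvd_triv_right)
    hence "n dvd ((L - card S) * a + card S * b)" by (simp only: int_dvd_int_iff)
    thus "S \<in> Ws n a b L" using w by (simp add: Ws_def)
  next
    fix S assume S: "S \<in> Ws n a b L"
    define D where "D = (L - card S) * a + card S * b"
    have SL: "S \<subseteq> {..<L}" and dv: "n dvd D" using S by (auto simp: Ws_def D_def)
    have JL: "card S \<le> L" using SL by (metis card_lessThan card_mono finite_lessThan)
    define \<omega> where "\<omega> = int (D div n)"
    have wn: "of_int \<omega> * of_nat n = (of_nat D :: rat)"
      using dv unfolding \<omega>_def by (metis dvd_mult_div_cancel mult.commute of_int_of_nat_eq of_nat_mult)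
    have "(of_nat D :: rat) = (of_nat L - of_nat (card S)) * of_nat a + of_nat (card S) * of_nat b"
      using JL by (simp add: D_def of_nat_diff)
    hence Dq: "(of_nat D :: rat) = of_nat L * of_nat a + of_nat (card S) * (of_nat b - of_nat a)"
      by (simp add: algebra_simps)
    have K: "Kq n a b L \<omega> = of_nat (card S)"
      using ba wn Dq by (simp add: Kq_def divide_simps)
    have "of_nat (L * a) \<le> (of_nat D :: rat)" using Dq ba by simp
    moreover have "(of_nat D :: rat) \<le> of_nat (L * b)"
    proof -
      have "(of_nat D :: rat) = of_nat L * of_nat b - (of_nat L - of_nat (card S)) * (of_nat b - of_nat a)"
        using Dq by (simp add: algebra_simps)
      moreover have "(of_nat L - of_nat (card S)) * (of_nat b - of_nat a) \<ge> (0::rat)"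
        using JL ba by simp
      ultimately show ?thesis by simp
    qed
    ultimately have "\<omega> \<in> Iv n a b L"
      unfolding Iv_def using ceil_le_iff_nat[OF assms(1), of "L*a" \<omega>] le_floor_iff_nat[OF assms(1), of \<omega> "L*b"] wn
      by (simp del: of_nat_mult)
    thus "S \<in> (\<Union>\<omega>\<in>Iv n a b L. A \<omega>)" using K SL unfolding A_def by (metis (mono_tags, lifting) UN_iff mem_Collect_eq)
  qed
  have "(\<Sum>\<omega>\<in>Iv n a b L. binom_q (of_nat L) (Kq n a b L \<omega>)) = (\<Sum>\<omega>\<in>Iv n a b L. of_nat (card (A \<omega>)))"
    by (simp add: binom_q_card A_def)
  also have "\<dots> = of_nat (\<Sum>\<omega>\<in>Iv n a b L. card (A \<omega>))" by simp
  also have "(\<Sum>\<omega>\<in>Iv n a b L. card (A \<omega>)) = card (\<Union>\<omega>\<in>Iv n a b L. A \<omega>)"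
    using card_UN_disjoint[OF finI, of A] finA disj by (metis (no_types, lifting))
  finally show ?thesis using U by simp
qed

lemma Iv_scale:
  assumes "n > 0" "m > 0" "l = m * L"
  shows "{\<omega>\<in>Iv n a b l. int m dvd \<omega>} = (\<lambda>w. int m * w) ` Iv n a b L"
proof -
  have mem: "int m * w \<in> Iv n a b l \<longleftrightarrow> w \<in> Iv n a b L" for w
  proof -
    have mpos: "(of_nat m :: rat) > 0" using assms by simp
    have "int m * w \<in> Iv n a b l \<longleftrightarrow>
      (of_nat (l*a) \<le> of_int (int m * w) * (of_nat n :: rat) \<and> of_int (int m * w) * (of_nat n :: rat) \<le> of_nat (l*b))"
      unfolding Iv_def using ceil_le_iff_nat[OF assms(1), of "l*a"] le_floor_iff_nat[OF assms(1), of _ "l*b"]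
      by (simp del: of_nat_mult of_int_mult)
    also have "\<dots> \<longleftrightarrow> (of_nat m * of_nat (L*a) \<le> of_nat m * (of_int w * (of_nat n :: rat)) \<and>
        of_nat m * (of_int w * (of_nat n :: rat)) \<le> of_nat m * of_nat (L*b))"
      using assms(3) by (simp add: algebra_simps)
    also have "\<dots> \<longleftrightarrow> (of_nat (L*a) \<le> of_int w * (of_nat n :: rat) \<and> of_int w * (of_nat n :: rat) \<le> of_nat (L*b))"
      using mpos by (simp only: mult_le_cancel_left_pos)
    also have "\<dots> \<longleftrightarrow> w \<in> Iv n a b L"
      unfolding Iv_def using ceil_le_iff_nat[OF assms(1), of "L*a"] le_floor_iff_nat[OF assms(1), of _ "L*b"]
      by (simp del: of_nat_mult of_int_mult)
    finally show ?thesis .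
  qed
  show ?thesis
  proof
    show "{\<omega>\<in>Iv n a b l. int m dvd \<omega>} \<subseteq> (\<lambda>w. int m * w) ` Iv n a b L"
    proof
      fix \<omega> assume "\<omega> \<in> {\<omega>\<in>Iv n a b l. int m dvd \<omega>}"
      then obtain w where "\<omega> = int m * w" "int m * w \<in> Iv n a b l" by (auto elim: dvdE)
      thus "\<omega> \<in> (\<lambda>w. int m * w) ` Iv n a b L" using mem by auto
    qed
    show "(\<lambda>w. int m * w) ` Iv n a b L \<subseteq> {\<omega>\<in>Iv n a b l. int m dvd \<omega>}"
      using mem by auto
  qed
qed

lemma Iv_pos:
  assumes "n > 0" "a > 0" "l \<ge> 1" "\<omega> \<in> Iv n a b l"
  shows "\<omega> > 0"
proof -
  have "of_nat (l*a) \<le> of_int \<omega> * (of_nat n :: rat)"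
    using assms(4) ceil_le_iff_nat[OF assms(1), of "l*a" \<omega>] unfolding Iv_def by (simp del: of_nat_mult)
  moreover have "(of_nat (l*a) :: rat) > 0" using assms by simp
  ultimately have "of_int \<omega> * (of_nat n :: rat) > 0" by linarith
  thus ?thesis using assms(1) by (simp add: zero_less_mult_iff)
qed

lemma l_div_m_Nats:
  assumes "m > 0" "(of_nat l / of_nat m :: rat) \<in> \<nat>"
  shows "m dvd l"
proof -
  obtain q where "(of_nat l / of_nat m :: rat) = of_nat q" using assms(2) by (auto elim: Nats_cases)
  hence "(of_nat l :: rat) = of_nat q * of_nat m" using assms(1) by (simp add: divide_simps)
  hence "l = q * m" by (metis of_nat_eq_iff of_nat_mult)
  thus ?thesis by simp
qed



theorem theorem2:
  fixes n a b l :: nat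
  assumes "n \<ge> 2" and "0 < a" and "a < b" and "b < n"
    and "gcd n (gcd a b) = 1"
    and "l \<ge> 1"
  shows "of_nat (card (prim_orbits n a b l)) =
    of_nat n / of_nat l *
      (\<Sum>\<omega>\<in>{\<lceil>of_nat (l * a) / (of_nat n :: rat)\<rceil> .. \<lfloor>of_nat (l * b) / (of_nat n :: rat)\<rfloor>}.
         \<Sum>m\<in>{m::nat. m > 0 \<and> int m dvd \<omega>}.
           of_int (moebius m) *
           binom_q (of_nat l / of_nat m)
             (((of_int \<omega> * of_nat n - of_nat l * of_nat a) / (of_nat b - of_nat a)) / of_nat m))"
proof -
  have n0: "n > 0" using assms by simp
  define I where "I = Iv n a b l"
  define Dl where "Dl = {m::nat. m > 0 \<and> m dvd l}"
  define g where "g = (\<lambda>\<omega> (m::nat). of_int (moebius m) * binom_q (of_nat l / of_nat m) (Kq n a b l \<omega> / of_nat m))"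
  have finI: "finite I" by (simp add: I_def Iv_def)
  have finDl: "finite Dl"
    by (rule finite_subset[of _ "{..l}"]) (use assms in \<open>auto simp: Dl_def dest: dvd_imp_le\<close>)
  have RHS: "(\<Sum>\<omega>\<in>{\<lceil>of_nat (l * a) / (of_nat n :: rat)\<rceil> .. \<lfloor>of_nat (l * b) / (of_nat n :: rat)\<rfloor>}.
         \<Sum>m\<in>{m::nat. m > 0 \<and> int m dvd \<omega>}.
           of_int (moebius m) *
           binom_q (of_nat l / of_nat m)
             (((of_int \<omega> * of_nat n - of_nat l * of_nat a) / (of_nat b - of_nat a)) / of_nat m))
     = (\<Sum>\<omega>\<in>I. \<Sum>m\<in>{m::nat. m > 0 \<and> int m dvd \<omega>}. g \<omega> m)"
    by (simp add: I_def Iv_def g_def Kq_def)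
  have S1: "(\<Sum>m\<in>{m::nat. m > 0 \<and> int m dvd \<omega>}. g \<omega> m) = (\<Sum>m\<in>Dl. if int m dvd \<omega> then g \<omega> m else 0)"
    if w: "\<omega> \<in> I" for \<omega>
  proof -
    have wpos: "\<omega> > 0" using Iv_pos[OF n0 assms(2) assms(6)] w by (simp add: I_def)
    have finDv: "finite {m::nat. m > 0 \<and> int m dvd \<omega>}"
    proof (rule finite_subset[of _ "{..nat \<omega>}"])
      show "{m::nat. m > 0 \<and> int m dvd \<omega>} \<subseteq> {..nat \<omega>}"
      proof
        fix m assume "m \<in> {m::nat. m > 0 \<and> int m dvd \<omega>}"
        hence "int m \<le> \<omega>" using wpos by (auto intro: zdvd_imp_le)
        thus "m \<in> {..nat \<omega>}" by simp
      qed
    qed simp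
    have "(\<Sum>m\<in>{m::nat. m > 0 \<and> int m dvd \<omega>}. g \<omega> m) = (\<Sum>m\<in>{m\<in>Dl. int m dvd \<omega>}. g \<omega> m)"
    proof (rule sum.mono_neutral_right[OF finDv])
      show "{m\<in>Dl. int m dvd \<omega>} \<subseteq> {m::nat. m > 0 \<and> int m dvd \<omega>}" by (auto simp: Dl_def)
      show "\<forall>i\<in>{m::nat. m > 0 \<and> int m dvd \<omega>} - {m\<in>Dl. int m dvd \<omega>}. g \<omega> i = 0"
      proof
        fix m assume m: "m \<in> {m::nat. m > 0 \<and> int m dvd \<omega>} - {m\<in>Dl. int m dvd \<omega>}"
        hence "m > 0" "\<not> m dvd l" by (auto simp: Dl_def)
        hence "(of_nat l / of_nat m :: rat) \<notin> \<nat>" using l_div_m_Nats by blast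
        thus "g \<omega> m = 0" by (simp add: g_def binom_q_def)
      qed
    qed
    also have "\<dots> = (\<Sum>m\<in>Dl. if int m dvd \<omega> then g \<omega> m else 0)"
      by (rule sum.inter_filter[OF finDl])
    finally show ?thesis .
  qed
  have S3: "(\<Sum>\<omega>\<in>I. if int m dvd \<omega> then g \<omega> m else 0) = of_int (moebius m) * of_nat (card (Ws n a b (l div m)))"
    if m: "m \<in> Dl" for m
  proof -
    define L where "L = l div m"
    have m0: "m > 0" and lmL: "l = m * L" using m by (auto simp: Dl_def L_def)
    have "(\<Sum>\<omega>\<in>I. if int m dvd \<omega> then g \<omega> m else 0) = (\<Sum>\<omega>\<in>{\<omega>\<in>I. int m dvd \<omega>}. g \<omega> m)"
      by (rule sum.inter_filter[OF finI, symmetric])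
    also have "{\<omega>\<in>I. int m dvd \<omega>} = (\<lambda>w. int m * w) ` Iv n a b L"
      unfolding I_def by (rule Iv_scale[OF n0 m0 lmL])
    also have "(\<Sum>\<omega>\<in>(\<lambda>w. int m * w) ` Iv n a b L. g \<omega> m) = (\<Sum>w\<in>Iv n a b L. g (int m * w) m)"
      by (rule sum.reindex_cong[where l="\<lambda>w. int m * w"]) (use m0 in \<open>auto simp: inj_on_def\<close>)
    also have "\<dots> = (\<Sum>w\<in>Iv n a b L. of_int (moebius m) * binom_q (of_nat L) (Kq n a b L w))"
    proof (rule sum.cong[OF refl])
      fix w
      have mq: "(of_nat m :: rat) \<noteq> 0" using m0 by simp
      have e1: "(of_nat l / of_nat m :: rat) = of_nat L" using lmL mq by simp
      have e2: "Kq n a b l (int m * w) / of_nat m = Kq n a b L w"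
        using lmL mq by (simp add: Kq_def divide_simps algebra_simps)
      show "g (int m * w) m = of_int (moebius m) * binom_q (of_nat L) (Kq n a b L w)"
        by (simp add: g_def e1 e2)
    qed
    also have "\<dots> = of_int (moebius m) * of_nat (card (Ws n a b L))"
      by (simp add: sum_distrib_left[symmetric] sum_binom_Ws[OF n0 assms(3)])
    finally show ?thesis by (simp add: L_def)
  qed
  have "(\<Sum>\<omega>\<in>I. \<Sum>m\<in>{m::nat. m > 0 \<and> int m dvd \<omega>}. g \<omega> m) =
        (\<Sum>\<omega>\<in>I. \<Sum>m\<in>Dl. if int m dvd \<omega> then g \<omega> m else 0)"
    using S1 by (rule sum.cong[OF refl])
  also have "\<dots> = (\<Sum>m\<in>Dl. \<Sum>\<omega>\<in>I. if int m dvd \<omega> then g \<omega> m else 0)"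
    by (rule sum.swap)
  also have "\<dots> = (\<Sum>m\<in>Dl. of_int (moebius m) * of_nat (card (Ws n a b (l div m))))"
    using S3 by (rule sum.cong[OF refl])
  finally have Sum: "(\<Sum>\<omega>\<in>I. \<Sum>m\<in>{m::nat. m > 0 \<and> int m dvd \<omega>}. g \<omega> m) =
     (\<Sum>m\<in>Dl. of_int (moebius m) * of_nat (card (Ws n a b (l div m))))" .
  have CP: "int (card (Prims n a b l)) = (\<Sum>m\<in>Dl. moebius m * int (card (Circs n a b (l div m))))"
    using card_Prims_moebius[OF assms(6)] by (simp add: Dl_def)
  have CW: "card (Circs n a b (l div m)) = n * card (Ws n a b (l div m))" if "m \<in> Dl" for m
  proof (rule card_Circs)
    have "m dvd l" using that by (simp add: Dl_def)
    then obtain q where "l = m * q" by (rule dvdE)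
    moreover have "m > 0" using that by (simp add: Dl_def)
    ultimately show "l div m \<ge> 1" using assms(6) by (cases q) auto
  qed (use assms in auto)
  have "of_nat l * of_nat (card (prim_orbits n a b l)) = (of_int (int (card (Prims n a b l))) :: rat)"
    using card_prim_orbits[of l n a b] by (metis of_int_of_nat_eq of_nat_mult)
  also have "\<dots> = (\<Sum>m\<in>Dl. of_int (moebius m) * of_nat (n * card (Ws n a b (l div m))))"
    unfolding CP by (simp add: CW)
  also have "\<dots> = of_nat n * (\<Sum>m\<in>Dl. of_int (moebius m) * of_nat (card (Ws n a b (l div m))))"
    by (simp add: sum_distrib_left algebra_simps)
  finally have "of_nat l * of_nat (card (prim_orbits n a b l)) =
       of_nat n * (\<Sum>\<omega>\<in>I. \<Sum>m\<in>{m::nat. m > 0 \<and> int m dvd \<omega>}. g \<omega> m)"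
    using Sum by simp
  moreover have "(of_nat l :: rat) \<noteq> 0" using assms by simp
  ultimately show ?thesis unfolding RHS by (simp add: field_simps)
qed

end
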